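(* For any weight $\omega\in\mathbb{R}^J$ with $\mathscr{T}_\omega=\mathscr{T}_{\max}$, the leading term ideal of $I_\mathcal{A}$ with respect to $\omega$ equals the Stanley–Reisner ideal of $\Sigma$, i.e. the ideal of $\mathbb{C}[y_{i,j}:(i,j)\in J]$ generated by the monomials $\prod_{(i,j)\in\mathcal{P}}y_{i,j}$ for $\mathcal{P}$ a primitive collection of $\Sigma$.
   Context: $N\cong\mathbb{Z}^n$, $M$ dual. $X$ smooth projective toric with fan $\Sigma$ and nef-partition $\Sigma(1)=I_1\sqcup\cdots\sqcup I_r$ (each $E_i=\sum_{\rho\in I_i}D_\rho$ nef), $I_i=\{\rho_{i,1},\dots,\rho_{i,n_i}\}$, $J=\{(i,j):1\le i\le r,0\le j\le n_i\}$, $\nu_{i,j}=(\rho_{i,j},e_i)$ ($j\ge1$), $\nu_{i,0}=(0,e_i)$ in $N\times\mathbb{Z}^r$, $\mathcal{A}=\{\nu_{i,j}\}$, $L_{\mathrm{ext}}=\ker(\mathbb{Z}^J\to N\times\mathbb{Z}^r,\ e_{i,j}\mapsto\nu_{i,j})$. Toric ideal $I_\mathcal{A}=\langle y^{\ell^+}-y^{\ell^-}:\ell\in L_{\mathrm{ext}}\rangle$, $\ell=\ell^+-\ell^-$ with $\ell^\pm\ge0$ of disjoint support; $\omega\in\mathbb{R}^J$ defines leading terms by maximal weight $\sum\omega_{i,j}m_{i,j}$ of $y^m$. $\mathscr{T}_\omega$ is the regular subdivision of $\mathcal{A}$ induced by $\omega$ (projection of lower faces of $\mathrm{Cone}\{(\nu,\omega_\nu)\}$);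 $\mathscr{T}_{\max}$ is the triangulation with maximal simplices $\{\nu_{1,0},\dots,\nu_{r,0}\}\cup\{\nu_{i,j}:\rho_{i,j}\in\sigma(1)\}$, $\sigma$ maximal in $\Sigma$. A primitive collection is $\mathcal{P}\subset\Sigma(1)$ not spanning a cone of $\Sigma$ while every proper subset does. *)

theory Defs
  imports "HOL-Analysis.Analysis" "HOL-Library.Poly_Mapping"
begin

text \<open>Parts of the nef-partition are indexed by i in {1..r}; the rays of I_i are
  indexed by pairs (i,j), 1 <= j <= nn i; the extra points nu_{i,0} by (i,0).\<close>

definition Jset :: "nat \<Rightarrow> (nat \<Rightarrow> nat) \<Rightarrow> (nat \<times> nat) set" where
  "Jset r nn = {(i,j). 1 \<le> i \<and> i \<le> r \<and> j \<le> nn i}"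

definition Rays :: "nat \<Rightarrow> (nat \<Rightarrow> nat) \<Rightarrow> (nat \<times> nat) set" where
  "Rays r nn = {(i,j). 1 \<le> i \<and> i \<le> r \<and> 1 \<le> j \<and> j \<le> nn i}"

definition rv :: "int ^ 'n \<Rightarrow> real ^ 'n" where
  "rv v = (\<chi> k. real_of_int (v $ k))"

section \<open>Fans (cones recorded by their sets of ray indices)\<close>

definition cone_of :: "(nat \<times> nat \<Rightarrow> int ^ 'n) \<Rightarrow> (nat \<times> nat) set \<Rightarrow> (real ^ 'n) set" where
  "cone_of \<rho> \<sigma> = {(\<Sum>k\<in>\<sigma>. c k *\<^sub>R rv (\<rho> k)) | c. \<forall>k\<in>\<sigma>. c k \<ge> 0}"

definition z_basis :: "(int ^ 'n) set \<Rightarrow> bool" where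
  "z_basis B \<longleftrightarrow> finite B \<and> inj_on rv B \<and> independent (rv ` B) \<and>
     (\<forall>v :: int ^ 'n. \<exists>c. v = (\<Sum>b\<in>B. c b *s b))"

definition is_fan :: "(nat \<times> nat \<Rightarrow> int ^ 'n) \<Rightarrow> (nat \<times> nat) set \<Rightarrow> (nat \<times> nat) set set \<Rightarrow> bool" where
  "is_fan \<rho> R cones \<longleftrightarrow> finite R \<and> finite cones \<and> (\<forall>\<sigma>\<in>cones. \<sigma> \<subseteq> R) \<and>
     (\<forall>\<sigma>\<in>cones. \<forall>\<tau>. \<tau> \<subseteq> \<sigma> \<longrightarrow> \<tau> \<in> cones) \<and>
     (\<forall>k\<in>R. {k} \<in> cones) \<and>
     (\<forall>\<sigma>\<in>cones. \<forall>\<tau>\<in>cones. cone_of \<rho> \<sigma> \<inter> cone_of \<rho> \<tau> = cone_of \<rho> (\<sigma> \<inter> \<tau>))"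

definition smooth_fan :: "(nat \<times> nat \<Rightarrow> int ^ 'n) \<Rightarrow> (nat \<times> nat) set \<Rightarrow> (nat \<times> nat) set set \<Rightarrow> bool" where
  "smooth_fan \<rho> R cones \<longleftrightarrow> inj_on \<rho> R \<and> (\<forall>\<sigma>\<in>cones. \<exists>B. z_basis B \<and> \<rho> ` \<sigma> \<subseteq> B)"

definition complete_fan :: "(nat \<times> nat \<Rightarrow> int ^ 'n) \<Rightarrow> (nat \<times> nat) set set \<Rightarrow> bool" where
  "complete_fan \<rho> cones \<longleftrightarrow> (\<Union>\<sigma>\<in>cones. cone_of \<rho> \<sigma>) = UNIV"

definition maximal_cone :: "(nat \<times> nat) set set \<Rightarrow> (nat \<times> nat) set \<Rightarrow> bool" where
  "maximal_cone cones \<sigma> \<longleftrightarrow> \<sigma> \<in> cones \<and> (\<forall>\<tau>\<in>cones. \<sigma> \<subseteq> \<tau> \<longrightarrow> \<tau> = \<sigma>)"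

text \<open>Projective: there is an ample divisor sum a_rho D_rho, i.e. one with strictly convex
  support function: for every maximal cone sigma some m_sigma has
  <m_sigma,u_rho> = -a_rho on sigma(1) and > -a_rho off sigma(1).\<close>
definition projective_fan :: "(nat \<times> nat \<Rightarrow> int ^ 'n) \<Rightarrow> (nat \<times> nat) set \<Rightarrow> (nat \<times> nat) set set \<Rightarrow> bool" where
  "projective_fan \<rho> R cones \<longleftrightarrow> (\<exists>a :: nat \<times> nat \<Rightarrow> int. \<forall>\<sigma>. maximal_cone cones \<sigma> \<longrightarrow>
     (\<exists>m :: real ^ 'n. (\<forall>k\<in>\<sigma>. m \<bullet> rv (\<rho> k) = - real_of_int (a k)) \<and>
                       (\<forall>k\<in>R - \<sigma>. m \<bullet> rv (\<rho> k) > - real_of_int (a k))))"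

definition nef_divisor :: "(nat \<times> nat \<Rightarrow> int ^ 'n) \<Rightarrow> (nat \<times> nat) set \<Rightarrow> (nat \<times> nat) set set \<Rightarrow> (nat \<times> nat \<Rightarrow> int) \<Rightarrow> bool" where
  "nef_divisor \<rho> R cones a \<longleftrightarrow> (\<forall>\<sigma>. maximal_cone cones \<sigma> \<longrightarrow>
     (\<exists>m :: real ^ 'n. (\<forall>k\<in>\<sigma>. m \<bullet> rv (\<rho> k) = - real_of_int (a k)) \<and>
                       (\<forall>k\<in>R. m \<bullet> rv (\<rho> k) \<ge> - real_of_int (a k))))"

text \<open>Nef-partition: each E_i = sum of D_rho for rho in I_i = {(i,j) : 1 <= j <= nn i} is nef.\<close>
definition nef_partition :: "(nat \<times> nat \<Rightarrow> int ^ 'n) \<Rightarrow> nat \<Rightarrow> (nat \<Rightarrow> nat) \<Rightarrow> (nat \<times> nat) set set \<Rightarrow> bool" where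
  "nef_partition \<rho> r nn cones \<longleftrightarrow> (\<forall>i\<in>{1..r}.
     nef_divisor \<rho> (Rays r nn) cones (\<lambda>k. if fst k = i then 1 else 0))"

definition primitive_collection :: "(nat \<times> nat) set \<Rightarrow> (nat \<times> nat) set set \<Rightarrow> (nat \<times> nat) set \<Rightarrow> bool" where
  "primitive_collection R cones P \<longleftrightarrow> P \<subseteq> R \<and> P \<notin> cones \<and> (\<forall>Q. Q \<subset> P \<longrightarrow> Q \<in> cones)"

text \<open>N-component of nu_{i,j}: rho_{i,j} for j >= 1 and 0 for j = 0; the Z^r-component is e_i.\<close>
definition nuN :: "(nat \<times> nat \<Rightarrow> int ^ 'n) \<Rightarrow> nat \<times> nat \<Rightarrow> int ^ 'n" where
  "nuN \<rho> k = (if snd k = 0 then 0 else \<rho> k)"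

text \<open>Cells (as index sets) of the regular subdivision T_omega: projections of the lower faces
  of Cone{(nu,omega_nu)}, i.e. sets F \<subseteq> J cut out by a linear functional (u,w) on
  N_R x R^r with <(u,w),nu_k> <= omega_k for all k in J, with equality exactly on F.\<close>
definition reg_subdiv :: "(nat \<times> nat \<Rightarrow> int ^ 'n) \<Rightarrow> nat \<Rightarrow> (nat \<Rightarrow> nat) \<Rightarrow> (nat \<times> nat \<Rightarrow> real) \<Rightarrow> (nat \<times> nat) set set" where
  "reg_subdiv \<rho> r nn \<omega> = {F. F \<subseteq> Jset r nn \<and> (\<exists>(u :: real ^ 'n) (w :: nat \<Rightarrow> real).
      \<forall>k\<in>Jset r nn. u \<bullet> rv (nuN \<rho> k) + w (fst k) \<le> \<omega> k \<and>
                    (k \<in> F \<longleftrightarrow> u \<bullet> rv (nuN \<rho> k) + w (fst k) = \<omega> k))}"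

text \<open>T_max as a simplicial complex: all faces of the simplices {nu_{1,0},...,nu_{r,0}} \<union> sigma(1).\<close>
definition T_max :: "nat \<Rightarrow> (nat \<times> nat) set set \<Rightarrow> (nat \<times> nat) set set" where
  "T_max r cones = {F. \<exists>\<sigma>. maximal_cone cones \<sigma> \<and> F \<subseteq> {(i,0) | i. 1 \<le> i \<and> i \<le> r} \<union> \<sigma>}"

type_synonym mpoly = "((nat \<times> nat) \<Rightarrow>\<^sub>0 nat) \<Rightarrow>\<^sub>0 complex"

definition polyJ :: "(nat \<times> nat) set \<Rightarrow> mpoly set" where
  "polyJ J = {p :: mpoly. \<forall>m\<in>Poly_Mapping.keys p. Poly_Mapping.keys m \<subseteq> J}"

definition ideal_gen :: "(nat \<times> nat) set \<Rightarrow> mpoly set \<Rightarrow> mpoly set" where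
  "ideal_gen J G = {(\<Sum>g\<in>F. q g * g) | F q. finite F \<and> F \<subseteq> G \<and> (\<forall>g\<in>F. q g \<in> polyJ J)}"

definition ymono :: "((nat \<times> nat) \<Rightarrow>\<^sub>0 nat) \<Rightarrow> mpoly" where
  "ymono m = Poly_Mapping.single m 1"

definition expo :: "(nat \<times> nat) set \<Rightarrow> (nat \<times> nat \<Rightarrow> nat) \<Rightarrow> (nat \<times> nat) \<Rightarrow>\<^sub>0 nat" where
  "expo J f = (\<Sum>k\<in>J. Poly_Mapping.single k (f k))"

definition L_ext :: "(nat \<times> nat \<Rightarrow> int ^ 'n) \<Rightarrow> nat \<Rightarrow> (nat \<Rightarrow> nat) \<Rightarrow> (nat \<times> nat \<Rightarrow> int) set" where
  "L_ext \<rho> r nn = {l. (\<forall>k. k \<notin> Jset r nn \<longrightarrow> l k = 0) \<and>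
      (\<Sum>k\<in>Jset r nn. l k *s nuN \<rho> k) = 0 \<and>
      (\<forall>i\<in>{1..r}. (\<Sum>k\<in>{k\<in>Jset r nn. fst k = i}. l k) = 0)}"

definition toric_ideal :: "(nat \<times> nat \<Rightarrow> int ^ 'n) \<Rightarrow> nat \<Rightarrow> (nat \<Rightarrow> nat) \<Rightarrow> mpoly set" where
  "toric_ideal \<rho> r nn = ideal_gen (Jset r nn)
     {ymono (expo (Jset r nn) (\<lambda>k. nat (l k))) - ymono (expo (Jset r nn) (\<lambda>k. nat (- l k))) | l. l \<in> L_ext \<rho> r nn}"

definition weight :: "(nat \<times> nat \<Rightarrow> real) \<Rightarrow> ((nat \<times> nat) \<Rightarrow>\<^sub>0 nat) \<Rightarrow> real" where
  "weight \<omega> m = (\<Sum>k\<in>Poly_Mapping.keys m. \<omega> k * real (Poly_Mapping.lookup m k))"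

definition in_form :: "(nat \<times> nat \<Rightarrow> real) \<Rightarrow> mpoly \<Rightarrow> mpoly" where
  "in_form \<omega> f = (\<Sum>m\<in>{m\<in>Poly_Mapping.keys f. weight \<omega> m = Max (weight \<omega> ` Poly_Mapping.keys f)}.
                    Poly_Mapping.single m (Poly_Mapping.lookup f m))"

definition lead_ideal :: "(nat \<times> nat) set \<Rightarrow> (nat \<times> nat \<Rightarrow> real) \<Rightarrow> mpoly set \<Rightarrow> mpoly set" where
  "lead_ideal J \<omega> I = ideal_gen J (in_form \<omega> ` I)"

definition stanley_reisner :: "nat \<Rightarrow> (nat \<Rightarrow> nat) \<Rightarrow> (nat \<times> nat) set set \<Rightarrow> mpoly set" where
  "stanley_reisner r nn cones = ideal_gen (Jset r nn)
     {ymono (expo P (\<lambda>_. 1)) | P. primitive_collection (Rays r nn) cones P}"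

end

theory Submission
  imports Defs
begin

lemma Jset_Sigma: "Jset r nn = (SIGMA i:{1..r}. {0..nn i})"
  by (auto simp: Jset_def)

lemma finite_Jset[simp]: "finite (Jset r nn)"
  by (simp add: Jset_Sigma)

lemma Rays_sub_Jset: "Rays r nn \<subseteq> Jset r nn"
  by (auto simp: Rays_def Jset_def)

lemma finite_Rays[simp]: "finite (Rays r nn)"
  using Rays_sub_Jset finite_Jset finite_subset by blast

lemma polyJ_0[simp]: "0 \<in> polyJ J"
  by (simp add: polyJ_def)

lemma polyJ_1[simp]: "1 \<in> polyJ J"
  by (simp add: polyJ_def)

lemma polyJ_add: "p \<in> polyJ J \<Longrightarrow> q \<in> polyJ J \<Longrightarrow> p + q \<in> polyJ J"
proof -
  assume a: "p \<in> polyJ J" "q \<in> polyJ J"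
  have "Poly_Mapping.keys (p + q) \<subseteq> Poly_Mapping.keys p \<union> Poly_Mapping.keys q"
    by (rule keys_add)
  then show ?thesis using a unfolding polyJ_def by auto
qed

lemma polyJ_diff: "p \<in> polyJ J \<Longrightarrow> q \<in> polyJ J \<Longrightarrow> p - q \<in> polyJ J"
proof -
  assume a: "p \<in> polyJ J" "q \<in> polyJ J"
  have "Poly_Mapping.keys (p - q) \<subseteq> Poly_Mapping.keys p \<union> Poly_Mapping.keys q"
    by (auto simp: in_keys_iff lookup_minus)
  then show ?thesis using a unfolding polyJ_def by auto
qed

lemma keys_add_nat: "Poly_Mapping.keys ((a::(nat\<times>nat) \<Rightarrow>\<^sub>0 nat) + b) = Poly_Mapping.keys a \<union> Poly_Mapping.keys b"
  by (auto simp: in_keys_iff lookup_add)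

lemma polyJ_mult: "p \<in> polyJ J \<Longrightarrow> q \<in> polyJ J \<Longrightarrow> p * q \<in> polyJ J"
proof -
  assume a: "p \<in> polyJ J" "q \<in> polyJ J"
  show ?thesis unfolding polyJ_def
  proof (intro CollectI ballI)
    fix m assume "m \<in> Poly_Mapping.keys (p * q)"
    then obtain x y where "m = x + y" "x \<in> Poly_Mapping.keys p" "y \<in> Poly_Mapping.keys q"
      using keys_mult by blast
    then show "Poly_Mapping.keys m \<subseteq> J" using a by (auto simp: polyJ_def keys_add_nat)
  qed
qed

lemma polyJ_sum: "finite F \<Longrightarrow> (\<And>x. x \<in> F \<Longrightarrow> f x \<in> polyJ J) \<Longrightarrow> sum f F \<in> polyJ J"
  by (induction F rule: finite_induct) (auto intro: polyJ_add)

lemma polyJ_single: "Poly_Mapping.keys m \<subseteq> J \<Longrightarrow> Poly_Mapping.single m c \<in> polyJ J"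
  by (simp add: polyJ_def)

lemma ideal_gen_gen: "g \<in> G \<Longrightarrow> g \<in> ideal_gen J G"
  unfolding ideal_gen_def
  by (rule CollectI, rule exI[of _ "{g}"], rule exI[of _ "\<lambda>_. 1"]) auto

lemma ideal_gen_0: "0 \<in> ideal_gen J G"
  unfolding ideal_gen_def
  by (rule CollectI, rule exI[of _ "{}"], rule exI[of _ "\<lambda>_. 1"]) auto

lemma ideal_gen_add:
  assumes "f \<in> ideal_gen J G" "h \<in> ideal_gen J G"
  shows "f + h \<in> ideal_gen J G"
proof -
  obtain F1 q1 where 1: "f = (\<Sum>g\<in>F1. q1 g * g)" "finite F1" "F1 \<subseteq> G" "\<forall>g\<in>F1. q1 g \<in> polyJ J"
    using assms(1) unfolding ideal_gen_def by blast
  obtain F2 q2 where 2: "h = (\<Sum>g\<in>F2. q2 g * g)" "finite F2" "F2 \<subseteq> G" "\<forall>g\<in>F2. q2 g \<in> polyJ J"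
    using assms(2) unfolding ideal_gen_def by blast
  define q where "q g = (if g \<in> F1 then q1 g else 0) + (if g \<in> F2 then q2 g else 0)" for g
  have "(\<Sum>g\<in>F1 \<union> F2. q g * g) = (\<Sum>g\<in>F1 \<union> F2. (if g \<in> F1 then q1 g * g else 0))
      + (\<Sum>g\<in>F1 \<union> F2. (if g \<in> F2 then q2 g * g else 0))"
    unfolding sum.distrib[symmetric] by (rule sum.cong) (auto simp: q_def distrib_right)
  also have "\<dots> = f + h"
    using 1 2 by (simp add: sum.If_cases Int_absorb1)
  finally have "f + h = (\<Sum>g\<in>F1 \<union> F2. q g * g)" by simp
  moreover have "\<forall>g\<in>F1 \<union> F2. q g \<in> polyJ J"
    using 1 2 unfolding q_def by (auto intro!: polyJ_add)
  ultimately show ?thesis using 1 2 unfolding ideal_gen_def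
    by (intro CollectI exI[of _ "F1 \<union> F2"] exI[of _ q]) auto
qed

lemma ideal_gen_sum: "finite F \<Longrightarrow> (\<And>x. x \<in> F \<Longrightarrow> f x \<in> ideal_gen J G) \<Longrightarrow> sum f F \<in> ideal_gen J G"
  by (induction F rule: finite_induct) (auto intro: ideal_gen_add ideal_gen_0)

lemma ideal_gen_mult:
  assumes "p \<in> polyJ J" "f \<in> ideal_gen J G"
  shows "p * f \<in> ideal_gen J G"
proof -
  obtain F q where 1: "f = (\<Sum>g\<in>F. q g * g)" "finite F" "F \<subseteq> G" "\<forall>g\<in>F. q g \<in> polyJ J"
    using assms(2) unfolding ideal_gen_def by blast
  have "p * f = (\<Sum>g\<in>F. (p * q g) * g)" using 1 by (simp add: sum_distrib_left mult.assoc)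
  moreover have "\<forall>g\<in>F. p * q g \<in> polyJ J" using 1 assms(1) by (auto intro: polyJ_mult)
  ultimately show ?thesis using 1 unfolding ideal_gen_def
    by (intro CollectI exI[of _ F] exI[of _ "\<lambda>g. p * q g"]) auto
qed

lemma ideal_gen_subset:
  assumes "G \<subseteq> ideal_gen J H"
  shows "ideal_gen J G \<subseteq> ideal_gen J H"
proof
  fix f assume "f \<in> ideal_gen J G"
  then obtain F q where 1: "f = (\<Sum>g\<in>F. q g * g)" "finite F" "F \<subseteq> G" "\<forall>g\<in>F. q g \<in> polyJ J"
    unfolding ideal_gen_def by blast
  show "f \<in> ideal_gen J H" unfolding 1(1)
    by (rule ideal_gen_sum) (use 1 assms in \<open>auto intro: ideal_gen_mult\<close>)
qed

lemma ideal_gen_polyJ: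
  assumes "G \<subseteq> polyJ J"
  shows "ideal_gen J G \<subseteq> polyJ J"
  unfolding ideal_gen_def using assms
  by (auto intro!: polyJ_sum polyJ_mult)

lemma poly_as_sum: "(p::'a \<Rightarrow>\<^sub>0 'b::comm_monoid_add) = (\<Sum>m\<in>Poly_Mapping.keys p. Poly_Mapping.single m (Poly_Mapping.lookup p m))"
proof (rule poly_mapping_eqI)
  fix k
  have "(\<Sum>m\<in>Poly_Mapping.keys p. Poly_Mapping.lookup (Poly_Mapping.single m (Poly_Mapping.lookup p m)) k)
     = (\<Sum>m\<in>Poly_Mapping.keys p. if m = k then Poly_Mapping.lookup p m else 0)"
    by (rule sum.cong) (auto simp: lookup_single when_def)
  also have "\<dots> = Poly_Mapping.lookup p k"
    by (simp add: in_keys_iff)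
  finally show "Poly_Mapping.lookup p k = Poly_Mapping.lookup (\<Sum>m\<in>Poly_Mapping.keys p. Poly_Mapping.single m (Poly_Mapping.lookup p m)) k"
    by (simp add: lookup_sum)
qed

lemma lookup_expo: "finite J \<Longrightarrow> Poly_Mapping.lookup (expo J f) k = (if k \<in> J then f k else 0)"
  unfolding expo_def by (simp add: lookup_sum lookup_single when_def sum.delta')

lemma keys_expo: "finite J \<Longrightarrow> Poly_Mapping.keys (expo J f) \<subseteq> J"
proof
  fix k assume "finite J" "k \<in> Poly_Mapping.keys (expo J f)"
  then show "k \<in> J" unfolding in_keys_iff using lookup_expo[of J f k] by (auto split: if_splits)
qed



definition dgN :: "(nat \<times> nat \<Rightarrow> int ^ 'n) \<Rightarrow> (nat \<times> nat) set \<Rightarrow> ((nat \<times> nat) \<Rightarrow>\<^sub>0 nat) \<Rightarrow> int ^ 'n" where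
  "dgN \<rho> J m = (\<Sum>k\<in>J. int (Poly_Mapping.lookup m k) *s nuN \<rho> k)"

definition dgZ :: "(nat \<times> nat) set \<Rightarrow> ((nat \<times> nat) \<Rightarrow>\<^sub>0 nat) \<Rightarrow> nat \<Rightarrow> nat" where
  "dgZ J m i = (\<Sum>k\<in>{k\<in>J. fst k = i}. Poly_Mapping.lookup m k)"

definition dg :: "(nat \<times> nat \<Rightarrow> int ^ 'n) \<Rightarrow> (nat \<times> nat) set \<Rightarrow> ((nat \<times> nat) \<Rightarrow>\<^sub>0 nat) \<Rightarrow> (int ^ 'n) \<times> (nat \<Rightarrow> nat)" where
  "dg \<rho> J m = (dgN \<rho> J m, dgZ J m)"

definition phi :: "(nat \<times> nat \<Rightarrow> int ^ 'n) \<Rightarrow> (nat \<times> nat) set \<Rightarrow> (int ^ 'n) \<times> (nat \<Rightarrow> nat) \<Rightarrow> mpoly \<Rightarrow> complex" where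
  "phi \<rho> J b f = (\<Sum>m\<in>Poly_Mapping.keys f. if dg \<rho> J m = b then Poly_Mapping.lookup f m else 0)"

lemma dgN_add: "dgN \<rho> J (m + n) = dgN \<rho> J m + dgN \<rho> J n"
  unfolding dgN_def by (simp add: lookup_add vector_sadd_rdistrib sum.distrib)

lemma dgZ_add: "dgZ J (m + n) i = dgZ J m i + dgZ J n i"
  unfolding dgZ_def by (simp add: lookup_add sum.distrib)

lemma dg_add_cong: "dg \<rho> J u = dg \<rho> J v \<Longrightarrow> dg \<rho> J (n + u) = dg \<rho> J (n + v)"
  unfolding dg_def by (auto simp: dgN_add dgZ_add fun_eq_iff)

lemma phi_superset:
  assumes "finite S" "Poly_Mapping.keys f \<subseteq> S"
  shows "phi \<rho> J b f = (\<Sum>m\<in>S. if dg \<rho> J m = b then Poly_Mapping.lookup f m else 0)"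
  unfolding phi_def
  by (rule sum.mono_neutral_left) (use assms in \<open>auto simp: in_keys_iff\<close>)

lemma phi_add: "phi \<rho> J b (f + g) = phi \<rho> J b f + phi \<rho> J b g"
proof -
  let ?S = "Poly_Mapping.keys f \<union> Poly_Mapping.keys g"
  have "Poly_Mapping.keys (f + g) \<subseteq> ?S" by (rule keys_add)
  then have "phi \<rho> J b (f + g) = (\<Sum>m\<in>?S. if dg \<rho> J m = b then Poly_Mapping.lookup (f + g) m else 0)"
    by (intro phi_superset) auto
  also have "\<dots> = (\<Sum>m\<in>?S. if dg \<rho> J m = b then Poly_Mapping.lookup f m else 0)
       + (\<Sum>m\<in>?S. if dg \<rho> J m = b then Poly_Mapping.lookup g m else 0)"
    by (simp add: lookup_add sum.distrib[symmetric] if_distrib cong: if_cong)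
  also have "\<dots> = phi \<rho> J b f + phi \<rho> J b g"
    by (subst (1 2) phi_superset[of ?S]) auto
  finally show ?thesis .
qed

lemma phi_zero[simp]: "phi \<rho> J b 0 = 0"
  by (simp add: phi_def)

lemma phi_uminus: "phi \<rho> J b (- f) = - phi \<rho> J b f"
proof -
  have "phi \<rho> J b (- f) + phi \<rho> J b f = 0"
    by (simp flip: phi_add)
  then show ?thesis by (simp add: eq_neg_iff_add_eq_0)
qed

lemma phi_diff: "phi \<rho> J b (f - g) = phi \<rho> J b f - phi \<rho> J b g"
  using phi_add[of \<rho> J b f "- g"] by (simp add: phi_uminus)

lemma phi_sum: "phi \<rho> J b (\<Sum>x\<in>F. f x) = (\<Sum>x\<in>F. phi \<rho> J b (f x))"
  by (induction F rule: infinite_finite_induct) (auto simp: phi_add)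

lemma phi_single: "phi \<rho> J b (Poly_Mapping.single m c) = (if dg \<rho> J m = b then c else 0)"
  by (simp add: phi_def)

lemma phi_mult_mono:
  "phi \<rho> J b (q * ymono u) = (\<Sum>n\<in>Poly_Mapping.keys q. if dg \<rho> J (n + u) = b then Poly_Mapping.lookup q n else 0)"
proof -
  have "q * ymono u = (\<Sum>n\<in>Poly_Mapping.keys q. Poly_Mapping.single n (Poly_Mapping.lookup q n)) * ymono u"
    by (subst poly_as_sum[of q]) (rule refl)
  also have "\<dots> = (\<Sum>n\<in>Poly_Mapping.keys q. Poly_Mapping.single (n + u) (Poly_Mapping.lookup q n))"
    by (simp add: sum_distrib_right ymono_def mult_single)
  finally show ?thesis by (simp add: phi_sum phi_single)
qed

lemma phi_binomial:
  assumes "dg \<rho> J u = dg \<rho> J v"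
  shows "phi \<rho> J b (q * (ymono u - ymono v)) = 0"
proof -
  have "phi \<rho> J b (q * ymono u) = phi \<rho> J b (q * ymono v)"
    unfolding phi_mult_mono using dg_add_cong[OF assms] by simp
  then show ?thesis by (simp add: right_diff_distrib phi_diff)
qed

lemma phi_ideal:
  assumes "\<And>g. g \<in> G \<Longrightarrow> \<exists>u v. g = ymono u - ymono v \<and> dg \<rho> J u = dg \<rho> J v"
    and "f \<in> ideal_gen J' G"
  shows "phi \<rho> J b f = 0"
proof -
  obtain F q where 1: "f = (\<Sum>g\<in>F. q g * g)" "finite F" "F \<subseteq> G"
    using assms(2) unfolding ideal_gen_def by blast
  have "phi \<rho> J b (q g * g) = 0" if gF: "g \<in> F" for g
  proof -
    obtain u v where "g = ymono u - ymono v" "dg \<rho> J u = dg \<rho> J v"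
      using assms(1) 1(3) gF by blast
    then show ?thesis using phi_binomial by simp
  qed
  then show ?thesis unfolding 1(1) phi_sum by simp
qed



lemma rv_sum: "rv (\<Sum>k\<in>S. c k *s v k) = (\<Sum>k\<in>S. real_of_int (c k) *\<^sub>R rv (v k))"
  by (simp add: rv_def vec_eq_iff)

lemma rv_zero[simp]: "rv 0 = 0"
  by (simp add: rv_def vec_eq_iff)

lemma rv_add: "rv (a + b) = rv a + rv b"
  by (simp add: rv_def vec_eq_iff)

lemma indep_inj_sum:
  fixes f :: "'a \<Rightarrow> real ^ 'n"
  assumes "finite S" "inj_on f S" "independent (f ` S)" "(\<Sum>k\<in>S. a k *\<^sub>R f k) = 0" "k \<in> S"
  shows "a k = 0"
proof -
  define c where "c x = a (inv_into S f x)" for x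
  have "(\<Sum>x\<in>f ` S. c x *\<^sub>R x) = (\<Sum>k\<in>S. c (f k) *\<^sub>R f k)"
    by (rule sum.reindex[OF assms(2), unfolded comp_def])
  also have "\<dots> = (\<Sum>k\<in>S. a k *\<^sub>R f k)"
    by (rule sum.cong) (use assms(2) in \<open>auto simp: c_def\<close>)
  finally have "(\<Sum>x\<in>f ` S. c x *\<^sub>R x) = 0" using assms(4) by simp
  then have "\<forall>x\<in>f ` S. c x = 0"
    using assms(3) unfolding independent_explicit by blast
  then have "c (f k) = 0" using assms(5) by blast
  then show ?thesis using assms(2,5) by (simp add: c_def)
qed

lemma sum_Jset: "(\<Sum>k\<in>Jset r nn. g k) = (\<Sum>i\<in>{1..r}. \<Sum>j\<in>{0..nn i}. g (i, j))"
  unfolding Jset_Sigma by (subst sum.Sigma) (auto simp: split_def)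

lemma slice_eq: "i \<in> {1..r} \<Longrightarrow> {k \<in> Jset r nn. fst k = i} = Pair i ` {0..nn i}"
  by (auto simp: Jset_def)

lemma sum_slice: "i \<in> {1..r} \<Longrightarrow> (\<Sum>k\<in>{k \<in> Jset r nn. fst k = i}. g k) = (\<Sum>j\<in>{0..nn i}. g (i, j))"
  by (simp add: slice_eq sum.reindex inj_on_def)

locale tsetup =
  fixes \<rho> :: "nat \<times> nat \<Rightarrow> int ^ 'n" and r :: nat and nn :: "nat \<Rightarrow> nat"
    and cones :: "(nat \<times> nat) set set" and \<omega> :: "nat \<times> nat \<Rightarrow> real"
  assumes fan: "is_fan \<rho> (Rays r nn) cones"
    and smooth: "smooth_fan \<rho> (Rays r nn) cones"
    and complete: "complete_fan \<rho> cones"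
    and nef: "nef_partition \<rho> r nn cones"
    and regeq: "reg_subdiv \<rho> r nn \<omega> = T_max r cones"
begin

abbreviation "J \<equiv> Jset r nn"
abbreviation "R \<equiv> Rays r nn"
abbreviation "Z \<equiv> {(i,0) | i. 1 \<le> i \<and> i \<le> r}"

lemma cones_sub: "\<sigma> \<in> cones \<Longrightarrow> \<sigma> \<subseteq> R"
  using fan unfolding is_fan_def by simp

lemma finite_cones: "finite cones"
  using fan unfolding is_fan_def by simp

lemma cones_down: "\<sigma> \<in> cones \<Longrightarrow> \<tau> \<subseteq> \<sigma> \<Longrightarrow> \<tau> \<in> cones"
  using fan unfolding is_fan_def by simp

lemma Z_sub_J: "Z \<subseteq> J"
  by (auto simp: Jset_def)

lemma J_eq: "J = Z \<union> R"
  by (auto simp: Jset_def Rays_def)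

lemma Z_R: "k \<in> Z \<Longrightarrow> k \<notin> R"
  by (auto simp: Rays_def)

lemma nuN_Z: "k \<in> Z \<Longrightarrow> nuN \<rho> k = 0"
  by (auto simp: nuN_def)

lemma nuN_R: "k \<in> R \<Longrightarrow> nuN \<rho> k = \<rho> k"
  by (auto simp: nuN_def Rays_def)

lemma indepF:
  assumes "\<sigma> \<in> cones" "\<forall>k\<in>J. l k \<noteq> 0 \<longrightarrow> k \<in> Z \<union> \<sigma>"
    "(\<Sum>k\<in>J. l k *s nuN \<rho> k) = 0" "\<forall>i\<in>{1..r}. (\<Sum>k\<in>{k\<in>J. fst k = i}. l k) = 0"
  shows "\<forall>k\<in>J. l k = 0"
proof -
  have sR: "\<sigma> \<subseteq> R" using cones_sub assms(1) .
  have sJ: "\<sigma> \<subseteq> J" using sR Rays_sub_Jset by blast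
  have fin: "finite \<sigma>" using sR finite_Rays finite_subset by blast
  obtain B where B: "z_basis B" "\<rho> ` \<sigma> \<subseteq> B"
    using smooth assms(1) unfolding smooth_fan_def by blast
  have inj\<rho>: "inj_on \<rho> \<sigma>"
    using smooth sR unfolding smooth_fan_def by (meson inj_on_subset)
  have injrv: "inj_on rv (\<rho> ` \<sigma>)"
    using B unfolding z_basis_def by (meson inj_on_subset)
  have indB: "independent (rv ` (\<rho> ` \<sigma>))"
    using B unfolding z_basis_def by (meson image_mono independent_mono)
  have "(\<Sum>k\<in>J. l k *s nuN \<rho> k) = (\<Sum>k\<in>\<sigma>. l k *s nuN \<rho> k)"
  proof (rule sum.mono_neutral_right)
    show "\<forall>k\<in>J - \<sigma>. l k *s nuN \<rho> k = 0"
    proof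
      fix k assume "k \<in> J - \<sigma>"
      then have "l k = 0 \<or> k \<in> Z" using assms(2) by blast
      then show "l k *s nuN \<rho> k = 0" using nuN_Z by auto
    qed
  qed (use sJ in auto)
  also have "\<dots> = (\<Sum>k\<in>\<sigma>. l k *s \<rho> k)"
    by (rule sum.cong) (use sR nuN_R in auto)
  finally have "(\<Sum>k\<in>\<sigma>. l k *s \<rho> k) = 0" using assms(3) by simp
  then have "rv (\<Sum>k\<in>\<sigma>. l k *s \<rho> k) = 0" by simp
  then have s0: "(\<Sum>k\<in>\<sigma>. real_of_int (l k) *\<^sub>R (rv \<circ> \<rho>) k) = 0"
    by (simp add: rv_sum)
  have ls: "l k = 0" if "k \<in> \<sigma>" for k
  proof -
    have i1: "inj_on (rv \<circ> \<rho>) \<sigma>" using inj\<rho> injrv by (rule comp_inj_on)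
    have i2: "independent ((rv \<circ> \<rho>) ` \<sigma>)" using indB by (simp add: image_comp)
    have "real_of_int (l k) = 0"
      by (rule indep_inj_sum[OF fin i1 i2 s0 that])
    then show ?thesis by simp
  qed
  show ?thesis
  proof
    fix k assume kJ: "k \<in> J"
    show "l k = 0"
    proof (cases "k \<in> Z")
      case False
      then show ?thesis using assms(2) kJ ls by blast
    next
      case True
      then obtain i where ki: "k = (i, 0)" "1 \<le> i" "i \<le> r" by blast
      have iin: "i \<in> {1..r}" using ki by simp
      have "(\<Sum>k\<in>{k\<in>J. fst k = i}. l k) = (\<Sum>j\<in>{0..nn i}. l (i, j))"
        using sum_slice[OF iin] .
      also have "\<dots> = (\<Sum>j\<in>{0}. l (i, j))"
      proof (rule sum.mono_neutral_right)
        show "\<forall>j\<in>{0..nn i} - {0}. l (i, j) = 0"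
        proof
          fix j assume j: "j \<in> {0..nn i} - {0}"
          have "(i, j) \<in> J" using j ki by (auto simp: Jset_def)
          moreover have "(i, j) \<notin> Z" using j by auto
          ultimately show "l (i, j) = 0" using assms(2) ls by blast
        qed
      qed auto
      finally show ?thesis using assms(4) iin ki by simp
    qed
  qed
qed

lemma Weq:
  assumes "(\<Sum>k\<in>J. l k *s nuN \<rho> k) = 0" "\<forall>i\<in>{1..r}. (\<Sum>k\<in>{k\<in>J. fst k = i}. l k) = 0"
  shows "(\<Sum>k\<in>J. real_of_int (l k) * (u \<bullet> rv (nuN \<rho> k) + w (fst k))) = 0"
proof -
  have 1: "(\<Sum>k\<in>J. real_of_int (l k) * (u \<bullet> rv (nuN \<rho> k))) = u \<bullet> rv (\<Sum>k\<in>J. l k *s nuN \<rho> k)"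
    by (simp add: rv_sum inner_sum_right)
  have 2: "(\<Sum>k\<in>J. real_of_int (l k) * w (fst k)) = (\<Sum>i\<in>{1..r}. w i * real_of_int (\<Sum>k\<in>{k\<in>J. fst k = i}. l k))"
    by (simp add: sum_Jset sum_slice sum_distrib_left mult.commute)
  have "(\<Sum>k\<in>J. real_of_int (l k) * (u \<bullet> rv (nuN \<rho> k) + w (fst k)))
     = (\<Sum>k\<in>J. real_of_int (l k) * (u \<bullet> rv (nuN \<rho> k))) + (\<Sum>k\<in>J. real_of_int (l k) * w (fst k))"
    by (simp add: distrib_left sum.distrib)
  also have "\<dots> = 0" unfolding 1 2 using assms by simp
  finally show ?thesis .
qed

end



context tsetup begin

lemma weight_J:
  assumes "Poly_Mapping.keys m \<subseteq> J"
  shows "weight \<omega> m = (\<Sum>k\<in>J. \<omega> k * real (Poly_Mapping.lookup m k))"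
  unfolding weight_def
  by (rule sum.mono_neutral_left) (use assms in \<open>auto simp: in_keys_iff\<close>)

lemma strict_weight:
  assumes sig: "maximal_cone cones \<sigma>" and km: "Poly_Mapping.keys m \<subseteq> Z \<union> \<sigma>"
    and kn: "Poly_Mapping.keys n \<subseteq> J"
    and dgeq: "dg \<rho> J n = dg \<rho> J m" and nm: "n \<noteq> m"
  shows "weight \<omega> m < weight \<omega> n"
proof -
  have sc: "\<sigma> \<in> cones" using sig unfolding maximal_cone_def by simp
  have sJ: "\<sigma> \<subseteq> J" using cones_sub[OF sc] Rays_sub_Jset by blast
  have kmJ: "Poly_Mapping.keys m \<subseteq> J" using km sJ Z_sub_J by blast
  have "Z \<union> \<sigma> \<in> T_max r cones" unfolding T_max_def using sig by blast
  then have "Z \<union> \<sigma> \<in> reg_subdiv \<rho> r nn \<omega>" using regeq by simp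
  then obtain u :: "real ^ 'n" and w :: "nat \<Rightarrow> real" where
    H: "\<forall>k\<in>J. u \<bullet> rv (nuN \<rho> k) + w (fst k) \<le> \<omega> k \<and>
        (k \<in> Z \<union> \<sigma> \<longleftrightarrow> u \<bullet> rv (nuN \<rho> k) + w (fst k) = \<omega> k)"
    unfolding reg_subdiv_def by blast
  define h where "h k = u \<bullet> rv (nuN \<rho> k) + w (fst k)" for k
  define l where "l k = int (Poly_Mapping.lookup n k) - int (Poly_Mapping.lookup m k)" for k
  have dN: "dgN \<rho> J n = dgN \<rho> J m" and dZ: "dgZ J n = dgZ J m"
    using dgeq unfolding dg_def by auto
  have A1: "(\<Sum>k\<in>J. l k *s nuN \<rho> k) = 0"
  proof -
    have "(\<Sum>k\<in>J. l k *s nuN \<rho> k) = dgN \<rho> J n - dgN \<rho> J m"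
      unfolding l_def dgN_def by (simp add: vector_sub_rdistrib sum_subtractf)
    then show ?thesis using dN by simp
  qed
  have A2: "\<forall>i\<in>{1..r}. (\<Sum>k\<in>{k\<in>J. fst k = i}. l k) = 0"
  proof
    fix i
    have "(\<Sum>k\<in>{k\<in>J. fst k = i}. l k) = int (dgZ J n i) - int (dgZ J m i)"
      unfolding l_def dgZ_def by (simp add: sum_subtractf)
    then show "(\<Sum>k\<in>{k\<in>J. fst k = i}. l k) = 0" using dZ by simp
  qed
  have W: "(\<Sum>k\<in>J. real_of_int (l k) * h k) = 0"
    unfolding h_def by (rule Weq[OF A1 A2])
  have wm: "weight \<omega> m = (\<Sum>k\<in>J. real (Poly_Mapping.lookup m k) * h k)"
    unfolding weight_J[OF kmJ]
  proof (rule sum.cong)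
    fix k assume kJ: "k \<in> J"
    show "\<omega> k * real (Poly_Mapping.lookup m k) = real (Poly_Mapping.lookup m k) * h k"
    proof (cases "Poly_Mapping.lookup m k = 0")
      case False
      then have "k \<in> Poly_Mapping.keys m" by (simp add: in_keys_iff)
      then have "k \<in> Z \<union> \<sigma>" using km by (rule subsetD[rotated])
      then have "h k = \<omega> k" using H kJ unfolding h_def by blast
      then show ?thesis by simp
    qed simp
  qed simp
  have hn: "(\<Sum>k\<in>J. real (Poly_Mapping.lookup n k) * h k) = (\<Sum>k\<in>J. real (Poly_Mapping.lookup m k) * h k)"
  proof -
    have "(\<Sum>k\<in>J. real (Poly_Mapping.lookup n k) * h k) - (\<Sum>k\<in>J. real (Poly_Mapping.lookup m k) * h k)
        = (\<Sum>k\<in>J. real_of_int (l k) * h k)"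
      unfolding l_def sum_subtractf[symmetric] by (rule sum.cong) (auto simp: left_diff_distrib)
    then show ?thesis using W by simp
  qed
  have D: "weight \<omega> n - weight \<omega> m = (\<Sum>k\<in>J. (\<omega> k - h k) * real (Poly_Mapping.lookup n k))"
  proof -
    have "weight \<omega> n - weight \<omega> m = (\<Sum>k\<in>J. \<omega> k * real (Poly_Mapping.lookup n k))
        - (\<Sum>k\<in>J. real (Poly_Mapping.lookup n k) * h k)"
      unfolding weight_J[OF kn] wm hn by simp
    also have "\<dots> = (\<Sum>k\<in>J. (\<omega> k - h k) * real (Poly_Mapping.lookup n k))"
      unfolding sum_subtractf[symmetric] by (rule sum.cong) (auto simp: algebra_simps)
    finally show ?thesis .
  qed
  have nonneg: "\<forall>k\<in>J. 0 \<le> (\<omega> k - h k) * real (Poly_Mapping.lookup n k)"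
    using H unfolding h_def by auto
  have "weight \<omega> m \<le> weight \<omega> n"
    using D nonneg sum_nonneg[of J "\<lambda>k. (\<omega> k - h k) * real (Poly_Mapping.lookup n k)"] by simp
  moreover have "weight \<omega> m \<noteq> weight \<omega> n"
  proof
    assume eq: "weight \<omega> m = weight \<omega> n"
    then have "(\<Sum>k\<in>J. (\<omega> k - h k) * real (Poly_Mapping.lookup n k)) = 0" using D by simp
    then have z: "\<forall>k\<in>J. (\<omega> k - h k) * real (Poly_Mapping.lookup n k) = 0"
      using sum_nonneg_eq_0_iff[of J "\<lambda>k. (\<omega> k - h k) * real (Poly_Mapping.lookup n k)"] nonneg
      by (metis finite_Jset)
    have supp: "\<forall>k\<in>J. l k \<noteq> 0 \<longrightarrow> k \<in> Z \<union> \<sigma>"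
    proof (intro ballI impI)
      fix k assume kJ: "k \<in> J" and lk: "l k \<noteq> 0"
      show "k \<in> Z \<union> \<sigma>"
      proof (cases "Poly_Mapping.lookup m k = 0")
        case False
        then have "k \<in> Poly_Mapping.keys m" by (simp add: in_keys_iff)
        then show ?thesis using km by (rule subsetD[rotated])
      next
        case True
        then have "Poly_Mapping.lookup n k \<noteq> 0" using lk unfolding l_def by simp
        moreover have "(\<omega> k - h k) * real (Poly_Mapping.lookup n k) = 0" using z kJ by blast
        ultimately have "\<omega> k = h k" by simp
        moreover have "k \<in> Z \<union> \<sigma> \<longleftrightarrow> h k = \<omega> k" using H kJ unfolding h_def by blast
        ultimately show ?thesis by simp
      qed
    qed
    have l0: "\<forall>k\<in>J. l k = 0" by (rule indepF[OF sc supp A1 A2])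
    have "n = m"
    proof (rule poly_mapping_eqI)
      fix k
      show "Poly_Mapping.lookup n k = Poly_Mapping.lookup m k"
      proof (cases "k \<in> J")
        case True
        then show ?thesis using l0 unfolding l_def by simp
      next
        case False
        then have "k \<notin> Poly_Mapping.keys n" "k \<notin> Poly_Mapping.keys m" using kn kmJ by auto
        then show ?thesis by (simp add: in_keys_iff)
      qed
    qed
    then show False using nm by simp
  qed
  ultimately show ?thesis by simp
qed

end



context tsetup begin

lemma slice_empty: "i \<notin> {1..r} \<Longrightarrow> {k \<in> J. fst k = i} = {}"
  by (auto simp: Jset_def)

lemma nat_diff_int: "int (nat x) - int (nat (- x)) = x"
  by arith

lemma gen_dg:
  assumes "l \<in> L_ext \<rho> r nn"
  shows "dg \<rho> J (expo J (\<lambda>k. nat (l k))) = dg \<rho> J (expo J (\<lambda>k. nat (- l k)))"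
proof -
  have L1: "(\<Sum>k\<in>J. l k *s nuN \<rho> k) = 0"
   and L2: "\<forall>i\<in>{1..r}. (\<Sum>k\<in>{k\<in>J. fst k = i}. l k) = 0"
    using assms unfolding L_ext_def by auto
  have N: "dgN \<rho> J (expo J (\<lambda>k. nat (l k))) - dgN \<rho> J (expo J (\<lambda>k. nat (- l k))) = (\<Sum>k\<in>J. l k *s nuN \<rho> k)"
    unfolding dgN_def sum_subtractf[symmetric]
  proof (rule sum.cong)
    fix k assume "k \<in> J"
    then show "int (Poly_Mapping.lookup (expo J (\<lambda>k. nat (l k))) k) *s nuN \<rho> k -
          int (Poly_Mapping.lookup (expo J (\<lambda>k. nat (- l k))) k) *s nuN \<rho> k = l k *s nuN \<rho> k"
      by (simp add: lookup_expo vector_sub_rdistrib[symmetric] nat_diff_int del: vector_sub_rdistrib)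
  qed simp
  have Zs: "dgZ J (expo J (\<lambda>k. nat (l k))) i = dgZ J (expo J (\<lambda>k. nat (- l k))) i" for i
  proof (cases "i \<in> {1..r}")
    case True
    have "int (dgZ J (expo J (\<lambda>k. nat (l k))) i) - int (dgZ J (expo J (\<lambda>k. nat (- l k))) i)
        = (\<Sum>k\<in>{k\<in>J. fst k = i}. l k)"
      unfolding dgZ_def of_nat_sum sum_subtractf[symmetric]
      by (rule sum.cong) (auto simp: lookup_expo nat_diff_int)
    then show ?thesis using L2 True by simp
  next
    case False
    then show ?thesis unfolding dgZ_def slice_empty[OF False] by simp
  qed
  show ?thesis unfolding dg_def using N L1 Zs by auto
qed

lemma toric_phi:
  assumes "f \<in> toric_ideal \<rho> r nn"
  shows "phi \<rho> J b f = 0"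
proof (rule phi_ideal[OF _ assms[unfolded toric_ideal_def]])
  fix g assume "g \<in> {ymono (expo J (\<lambda>k. nat (l k))) - ymono (expo J (\<lambda>k. nat (- l k))) | l. l \<in> L_ext \<rho> r nn}"
  then obtain l where "l \<in> L_ext \<rho> r nn" "g = ymono (expo J (\<lambda>k. nat (l k))) - ymono (expo J (\<lambda>k. nat (- l k)))"
    by blast
  then show "\<exists>u v. g = ymono u - ymono v \<and> dg \<rho> J u = dg \<rho> J v"
    using gen_dg by blast
qed

lemma ymono_polyJ: "Poly_Mapping.keys a \<subseteq> J \<Longrightarrow> ymono a \<in> polyJ J"
  unfolding ymono_def by (rule polyJ_single)

lemma toric_polyJ: "toric_ideal \<rho> r nn \<subseteq> polyJ J"
  unfolding toric_ideal_def
  by (rule ideal_gen_polyJ) (auto intro!: polyJ_diff ymono_polyJ keys_expo)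

lemma max_ext:
  assumes "\<sigma>0 \<in> cones"
  shows "\<exists>\<sigma>. maximal_cone cones \<sigma> \<and> \<sigma>0 \<subseteq> \<sigma>"
proof -
  have f: "finite {\<tau>\<in>cones. \<sigma>0 \<subseteq> \<tau>}" using finite_cones by simp
  have ne: "{\<tau>\<in>cones. \<sigma>0 \<subseteq> \<tau>} \<noteq> {}" using assms by auto
  obtain \<sigma> where s: "\<sigma> \<in> {\<tau>\<in>cones. \<sigma>0 \<subseteq> \<tau>}"
    "\<forall>b\<in>{\<tau>\<in>cones. \<sigma>0 \<subseteq> \<tau>}. \<sigma> \<le> b \<longrightarrow> \<sigma> = b"
    using finite_has_maximal[OF f ne] by (elim bexE) simp
  have "maximal_cone cones \<sigma>" unfolding maximal_cone_def
  proof (intro conjI ballI impI)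
    show "\<sigma> \<in> cones" using s(1) by simp
    fix \<tau> assume t: "\<tau> \<in> cones" "\<sigma> \<subseteq> \<tau>"
    then have "\<tau> \<in> {\<tau>\<in>cones. \<sigma>0 \<subseteq> \<tau>}" using s(1) by auto
    then have "\<sigma> \<le> \<tau> \<longrightarrow> \<sigma> = \<tau>" using s(2) by (rule bspec[rotated])
    then show "\<tau> = \<sigma>" using t by simp
  qed
  then show ?thesis using s(1) by auto
qed

lemma prim_ex:
  assumes "S \<subseteq> R" "S \<notin> cones"
  shows "\<exists>P \<subseteq> S. primitive_collection R cones P"
proof -
  have fS: "finite S" using assms(1) finite_Rays finite_subset by blast
  have fin: "finite {Q. Q \<subseteq> S \<and> Q \<notin> cones}"
    by (rule finite_subset[of _ "Pow S"]) (use fS in auto)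
  have ne: "{Q. Q \<subseteq> S \<and> Q \<notin> cones} \<noteq> {}" using assms by auto
  obtain P where P: "P \<in> {Q. Q \<subseteq> S \<and> Q \<notin> cones}"
    "\<forall>b\<in>{Q. Q \<subseteq> S \<and> Q \<notin> cones}. b \<le> P \<longrightarrow> P = b"
    using finite_has_minimal[OF fin ne] by (elim bexE) simp
  have "primitive_collection R cones P"
    unfolding primitive_collection_def
  proof (intro conjI allI impI)
    show "P \<subseteq> R" using P(1) assms(1) by auto
    show "P \<notin> cones" using P(1) by auto
    fix Q assume QP: "Q \<subset> P"
    show "Q \<in> cones"
    proof (rule ccontr)
      assume "Q \<notin> cones"
      moreover have "Q \<subseteq> S" using QP P(1) by auto
      ultimately have "Q \<in> {Q. Q \<subseteq> S \<and> Q \<notin> cones}" by simp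
      then have "Q \<le> P \<longrightarrow> P = Q" using P(2) by (rule bspec[rotated])
      moreover have "Q \<le> P" using QP by (rule psubset_imp_subset)
      ultimately have "P = Q" by (rule mp)
      then show False using QP by (simp add: psubset_eq)
    qed
  qed
  then show ?thesis using P(1) by auto
qed

lemma lookup_expo1: "finite P \<Longrightarrow> Poly_Mapping.lookup (expo P (\<lambda>_. 1)) k = (if k \<in> P then 1 else 0)"
  by (simp add: lookup_expo)

lemma dvd_SR:
  assumes "primitive_collection R cones P" "P \<subseteq> Poly_Mapping.keys m" "Poly_Mapping.keys m \<subseteq> J"
  shows "Poly_Mapping.single m c \<in> stanley_reisner r nn cones"
proof -
  have fP: "finite P" using assms(1) finite_Rays finite_subset unfolding primitive_collection_def by blast
  define E where "E = expo P (\<lambda>_. 1)"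
  have mE: "m = (m - E) + E"
  proof (rule poly_mapping_eqI)
    fix k
    have "Poly_Mapping.lookup E k \<le> Poly_Mapping.lookup m k"
    proof (cases "k \<in> P")
      case True
      then have "k \<in> Poly_Mapping.keys m" using assms(2) by auto
      then have "Poly_Mapping.lookup m k \<noteq> 0" by (simp add: in_keys_iff)
      then show ?thesis using True fP unfolding E_def by (simp add: lookup_expo)
    next
      case False
      then show ?thesis using fP unfolding E_def by (simp add: lookup_expo)
    qed
    then show "Poly_Mapping.lookup m k = Poly_Mapping.lookup (m - E + E) k"
      by (simp add: lookup_add lookup_minus)
  qed
  have kmE: "Poly_Mapping.keys (m - E) \<subseteq> J"
    using assms(3) by (auto simp: in_keys_iff lookup_minus)
  have "Poly_Mapping.single m c = Poly_Mapping.single (m - E) c * ymono E"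
    by (subst mE) (simp add: ymono_def mult_single)
  moreover have "ymono E \<in> stanley_reisner r nn cones"
    unfolding stanley_reisner_def E_def using assms(1) by (intro ideal_gen_gen) blast
  moreover have "Poly_Mapping.single (m - E) c \<in> polyJ J" using kmE by (rule polyJ_single)
  ultimately show ?thesis
    unfolding stanley_reisner_def by (simp add: ideal_gen_mult)
qed

lemma in_form_term_SR:
  assumes f: "f \<in> toric_ideal \<rho> r nn"
    and mkeys: "m \<in> Poly_Mapping.keys f"
    and mmax: "weight \<omega> m = Max (weight \<omega> ` Poly_Mapping.keys f)"
  shows "Poly_Mapping.single m c \<in> stanley_reisner r nn cones"
proof -
  have fJ: "f \<in> polyJ J" using f toric_polyJ by (rule subsetD[rotated])
  have kmJ: "Poly_Mapping.keys m \<subseteq> J" using fJ mkeys unfolding polyJ_def by simp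
  show ?thesis
  proof (cases "Poly_Mapping.keys m \<inter> R \<in> cones")
    case False
    have KR: "Poly_Mapping.keys m \<inter> R \<subseteq> R" by (rule Int_lower2)
    then obtain P where P: "P \<subseteq> Poly_Mapping.keys m \<inter> R" "primitive_collection R cones P"
      using prim_ex[OF KR False] by blast
    have PK: "P \<subseteq> Poly_Mapping.keys m" using P(1) by (rule subset_trans) (rule Int_lower1)
    show ?thesis by (rule dvd_SR[OF P(2) PK kmJ])
  next
    case True
    then obtain \<sigma> where sig: "maximal_cone cones \<sigma>" "Poly_Mapping.keys m \<inter> R \<subseteq> \<sigma>"
      using max_ext[OF True] by blast
    have kmF: "Poly_Mapping.keys m \<subseteq> Z \<union> \<sigma>"
    proof
      fix k assume kk: "k \<in> Poly_Mapping.keys m"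
      have "k \<in> J" using kmJ kk by (rule subsetD)
      then have "k \<in> Z \<union> R" by (simp only: J_eq)
      then show "k \<in> Z \<union> \<sigma>"
      proof (rule UnE)
        assume "k \<in> R"
        then have "k \<in> Poly_Mapping.keys m \<inter> R" using kk by (rule IntI[rotated])
        then have "k \<in> \<sigma>" using sig(2) by (rule subsetD[rotated])
        then show ?thesis by (rule UnI2)
      qed (rule UnI1)
    qed
    let ?b = "dg \<rho> J m"
    let ?g = "\<lambda>n. if dg \<rho> J n = ?b then Poly_Mapping.lookup f n else 0"
    have "phi \<rho> J ?b f = 0" using toric_phi[OF f] .
    then have e1: "sum ?g (Poly_Mapping.keys f) = 0"
      unfolding phi_def .
    have e2: "sum ?g (Poly_Mapping.keys f) = ?g m + sum ?g (Poly_Mapping.keys f - {m})"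
      by (rule sum.remove[OF finite_keys mkeys])
    have e3: "?g m \<noteq> 0" using mkeys by (simp add: in_keys_iff)
    have s0: "sum ?g (Poly_Mapping.keys f - {m}) \<noteq> 0"
    proof
      assume "sum ?g (Poly_Mapping.keys f - {m}) = 0"
      then have "?g m = 0" using e1 e2 by simp
      then show False using e3 by simp
    qed
    have "\<exists>n\<in>Poly_Mapping.keys f - {m}. ?g n \<noteq> 0"
    proof (rule ccontr)
      assume "\<not> (\<exists>n\<in>Poly_Mapping.keys f - {m}. ?g n \<noteq> 0)"
      then have "\<forall>n\<in>Poly_Mapping.keys f - {m}. ?g n = 0" by simp
      then have "sum ?g (Poly_Mapping.keys f - {m}) = 0" by (rule sum.neutral)
      then show False using s0 by simp
    qed
    then obtain n where n: "n \<in> Poly_Mapping.keys f - {m}" "?g n \<noteq> 0"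
      by (elim bexE) simp
    have ndg: "dg \<rho> J n = ?b" using n(2) by (simp split: if_splits)
    have nm: "n \<noteq> m" using n(1) by simp
    have knJ: "Poly_Mapping.keys n \<subseteq> J" using fJ n(1) unfolding polyJ_def by simp
    have "weight \<omega> m < weight \<omega> n"
      using strict_weight[OF sig(1) kmF knJ ndg nm] .
    moreover have "weight \<omega> n \<le> Max (weight \<omega> ` Poly_Mapping.keys f)"
      using n(1) by (intro Max_ge) auto
    ultimately show ?thesis using mmax by simp
  qed
qed

lemma in_form_SR:
  assumes f: "f \<in> toric_ideal \<rho> r nn"
  shows "in_form \<omega> f \<in> stanley_reisner r nn cones"
proof -
  let ?S = "{m \<in> Poly_Mapping.keys f. weight \<omega> m = Max (weight \<omega> ` Poly_Mapping.keys f)}"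
  have h: "Poly_Mapping.single m (Poly_Mapping.lookup f m) \<in> stanley_reisner r nn cones" if "m \<in> ?S" for m
    using in_form_term_SR[OF f] that by simp
  have fin: "finite ?S" by simp
  show ?thesis unfolding in_form_def by (rule ideal_gen_sum[OF fin h[unfolded stanley_reisner_def], folded stanley_reisner_def])
qed

lemma subset_dir: "lead_ideal J \<omega> (toric_ideal \<rho> r nn) \<subseteq> stanley_reisner r nn cones"
proof -
  have H: "in_form \<omega> ` toric_ideal \<rho> r nn \<subseteq> ideal_gen J {ymono (expo P (\<lambda>_. 1)) | P. primitive_collection R cones P}"
    by (intro image_subsetI) (rule in_form_SR[unfolded stanley_reisner_def])
  show ?thesis unfolding lead_ideal_def stanley_reisner_def by (rule ideal_gen_subset[OF H])
qed

end



context tsetup begin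

lemma int_rep:
  fixes v :: "int ^ 'n"
  shows "\<exists>\<sigma> a. maximal_cone cones \<sigma> \<and> (\<forall>k\<in>\<sigma>. 0 \<le> a k) \<and> v = (\<Sum>k\<in>\<sigma>. a k *s \<rho> k)"
proof -
  have "rv v \<in> (\<Union>\<sigma>\<in>cones. cone_of \<rho> \<sigma>)" using complete unfolding complete_fan_def by simp
  then obtain \<sigma>0 where s0: "\<sigma>0 \<in> cones" "rv v \<in> cone_of \<rho> \<sigma>0" by (elim UN_E)
  then obtain c where c: "rv v = (\<Sum>k\<in>\<sigma>0. c k *\<^sub>R rv (\<rho> k))" "\<forall>k\<in>\<sigma>0. c k \<ge> 0"
    unfolding cone_of_def by blast
  obtain \<sigma> where sig: "maximal_cone cones \<sigma>" "\<sigma>0 \<subseteq> \<sigma>" using max_ext[OF s0(1)] by blast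
  have sc: "\<sigma> \<in> cones" using sig(1) unfolding maximal_cone_def by simp
  have sR: "\<sigma> \<subseteq> R" by (rule cones_sub[OF sc])
  have s0R: "\<sigma>0 \<subseteq> R" using sig(2) sR by (rule subset_trans)
  obtain B where B: "z_basis B" "\<rho> ` \<sigma> \<subseteq> B" using smooth sc unfolding smooth_fan_def by blast
  have finB: "finite B" and injB: "inj_on rv B" and indB: "independent (rv ` B)"
    using B(1) unfolding z_basis_def by auto
  obtain d where d: "v = (\<Sum>b\<in>B. d b *s b)" using B(1) unfolding z_basis_def by blast
  have inj\<rho>: "inj_on \<rho> R" using smooth unfolding smooth_fan_def by simp
  have inj0: "inj_on \<rho> \<sigma>0" using inj\<rho> s0R by (rule inj_on_subset)
  have sub0: "\<rho> ` \<sigma>0 \<subseteq> B" using sig(2) B(2) by blast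
  define e where "e b = (if b \<in> \<rho> ` \<sigma>0 then c (inv_into \<sigma>0 \<rho> b) else 0)" for b
  have "(\<Sum>b\<in>B. e b *\<^sub>R rv b) = (\<Sum>b\<in>\<rho> ` \<sigma>0. e b *\<^sub>R rv b)"
    by (rule sum.mono_neutral_right[OF finB sub0]) (simp add: e_def)
  also have "\<dots> = (\<Sum>k\<in>\<sigma>0. e (\<rho> k) *\<^sub>R rv (\<rho> k))"
    by (rule sum.reindex[OF inj0, unfolded comp_def])
  also have "\<dots> = (\<Sum>k\<in>\<sigma>0. c k *\<^sub>R rv (\<rho> k))"
    by (rule sum.cong) (simp_all add: e_def inv_into_f_f[OF inj0])
  finally have E: "(\<Sum>b\<in>B. e b *\<^sub>R rv b) = rv v" using c(1) by simp
  have D: "rv v = (\<Sum>b\<in>B. real_of_int (d b) *\<^sub>R rv b)" unfolding d by (rule rv_sum)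
  have "(\<Sum>b\<in>B. (real_of_int (d b) - e b) *\<^sub>R rv b) = 0"
    using D E by (simp add: scaleR_diff_left sum_subtractf)
  then have eq: "real_of_int (d b) = e b" if "b \<in> B" for b
    using indep_inj_sum[OF finB injB indB _ that, of "\<lambda>b. real_of_int (d b) - e b"] by simp
  define a where "a k = d (\<rho> k)" for k
  have a_nonneg: "\<forall>k\<in>\<sigma>. 0 \<le> a k"
  proof
    fix k assume k: "k \<in> \<sigma>"
    have "\<rho> k \<in> B" using k B(2) by blast
    then have "real_of_int (a k) = e (\<rho> k)" unfolding a_def using eq by simp
    moreover have "e (\<rho> k) \<ge> 0"
    proof (cases "\<rho> k \<in> \<rho> ` \<sigma>0")
      case True
      then obtain k' where k': "k' \<in> \<sigma>0" "\<rho> k = \<rho> k'" by blast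
      have "e (\<rho> k) = c k'" unfolding e_def using True k' inv_into_f_f[OF inj0 k'(1)] by simp
      then show ?thesis using c(2) k'(1) by simp
    qed (simp add: e_def)
    ultimately show "0 \<le> a k" by simp
  qed
  have vs: "v = (\<Sum>k\<in>\<sigma>. a k *s \<rho> k)"
  proof -
    have "v = (\<Sum>b\<in>\<rho> ` \<sigma>. d b *s b)"
      unfolding d
    proof (rule sum.mono_neutral_right[OF finB B(2)], rule ballI)
      fix b assume b: "b \<in> B - \<rho> ` \<sigma>"
      then have "b \<notin> \<rho> ` \<sigma>0" using sig(2) by blast
      then have "real_of_int (d b) = 0" using eq[of b] b by (simp add: e_def)
      then show "d b *s b = 0" by simp
    qed
    also have "\<dots> = (\<Sum>k\<in>\<sigma>. d (\<rho> k) *s \<rho> k)"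
      using inj_on_subset[OF inj\<rho> sR] by (rule sum.reindex[unfolded comp_def])
    finally show ?thesis unfolding a_def .
  qed
  show ?thesis using sig(1) a_nonneg vs by blast
qed

lemma nef_ineq:
  assumes sig: "maximal_cone cones \<sigma>" and a: "\<forall>k\<in>\<sigma>. 0 \<le> a k"
    and v: "(\<Sum>k\<in>P. \<rho> k) = (\<Sum>k\<in>\<sigma>. a k *s \<rho> k)" and PR: "P \<subseteq> R" and i: "i \<in> {1..r}"
  shows "(\<Sum>k\<in>\<sigma>. if fst k = i then a k else 0) \<le> (\<Sum>k\<in>P. if fst k = i then 1 else 0)"
proof -
  have sR: "\<sigma> \<subseteq> R" using sig cones_sub unfolding maximal_cone_def by simp
  have "nef_divisor \<rho> R cones (\<lambda>k. if fst k = i then 1 else 0)" using nef i unfolding nef_partition_def by simp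
  then obtain m :: "real ^ 'n" where
    m1: "\<forall>k\<in>\<sigma>. m \<bullet> rv (\<rho> k) = - real_of_int (if fst k = i then 1 else 0)" and
    m2: "\<forall>k\<in>R. m \<bullet> rv (\<rho> k) \<ge> - real_of_int (if fst k = i then 1 else 0)"
    using sig unfolding nef_divisor_def by blast
  have "m \<bullet> rv (\<Sum>k\<in>P. \<rho> k) = (\<Sum>k\<in>P. m \<bullet> rv (\<rho> k))"
    using rv_sum[of "\<lambda>_. 1" \<rho> P] by (simp add: inner_sum_right)
  also have "\<dots> \<ge> (\<Sum>k\<in>P. - real_of_int (if fst k = i then 1 else 0))"
    by (rule sum_mono) (use m2 PR in blast)
  finally have L: "m \<bullet> rv (\<Sum>k\<in>P. \<rho> k) \<ge> - real_of_int (\<Sum>k\<in>P. if fst k = i then 1 else 0)"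
    by (simp add: sum_negf)
  have "m \<bullet> rv (\<Sum>k\<in>\<sigma>. a k *s \<rho> k) = (\<Sum>k\<in>\<sigma>. real_of_int (a k) * (m \<bullet> rv (\<rho> k)))"
    by (simp add: rv_sum inner_sum_right)
  also have "\<dots> = (\<Sum>k\<in>\<sigma>. - real_of_int (if fst k = i then a k else 0))"
    by (rule sum.cong) (simp_all add: m1)
  finally have R: "m \<bullet> rv (\<Sum>k\<in>\<sigma>. a k *s \<rho> k) = - real_of_int (\<Sum>k\<in>\<sigma>. if fst k = i then a k else 0)"
    by (simp add: sum_negf)
  have "- real_of_int (\<Sum>k\<in>\<sigma>. if fst k = i then a k else 0) \<ge> - real_of_int (\<Sum>k\<in>P. if fst k = i then 1 else 0)"
    using L R v by simp
  then show ?thesis by (simp only: neg_le_iff_le of_int_le_iff)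
qed

end



lemma sum_swap_filter:
  assumes "finite J" "S \<subseteq> J"
  shows "(\<Sum>k\<in>{k\<in>J. p k}. if k \<in> S then g k else 0) = (\<Sum>k\<in>S. if p k then g k else 0)"
proof -
  have fS: "finite S" using assms(2,1) by (rule finite_subset)
  have "(\<Sum>k\<in>{k\<in>J. p k}. if k \<in> S then g k else 0) = sum g ({k\<in>J. p k} \<inter> S)"
    by (rule sum.inter_restrict[symmetric]) (use assms(1) in simp)
  also have "{k\<in>J. p k} \<inter> S = {k\<in>S. p k}" using assms(2) by auto
  also have "sum g {k\<in>S. p k} = (\<Sum>k\<in>S. if p k then g k else 0)"
    by (rule sum.inter_filter[OF fS])
  finally show ?thesis .
qed

context tsetup begin

lemma prim_in_lead:
  assumes P: "primitive_collection R cones P"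
  shows "ymono (expo P (\<lambda>_. 1)) \<in> lead_ideal J \<omega> (toric_ideal \<rho> r nn)"
proof -
  have PR: "P \<subseteq> R" and Pnc: "P \<notin> cones" using P unfolding primitive_collection_def by auto
  have PJ: "P \<subseteq> J" using PR Rays_sub_Jset by (rule subset_trans)
  have fP: "finite P" using PR finite_Rays by (rule finite_subset)
  obtain \<sigma> a where sig: "maximal_cone cones \<sigma>" and a0: "\<forall>k\<in>\<sigma>. 0 \<le> a k"
    and v: "(\<Sum>k\<in>P. \<rho> k) = (\<Sum>k\<in>\<sigma>. a k *s \<rho> k)"
    using int_rep[of "\<Sum>k\<in>P. \<rho> k"] by blast
  have sc: "\<sigma> \<in> cones" using sig unfolding maximal_cone_def by simp
  have sR: "\<sigma> \<subseteq> R" by (rule cones_sub[OF sc])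
  have sJ: "\<sigma> \<subseteq> J" using sR Rays_sub_Jset by (rule subset_trans)
  define cP where "cP i = (\<Sum>k\<in>P. if fst k = i then 1 else 0 :: int)" for i
  define cS where "cS i = (\<Sum>k\<in>\<sigma>. if fst k = i then a k else 0)" for i
  have cle: "cS i \<le> cP i" if "i \<in> {1..r}" for i
    unfolding cS_def cP_def by (rule nef_ineq[OF sig a0 v PR that])
  define t where "t i = cP i - cS i" for i
  define l where "l k = (if k \<in> P then 1 else 0) - (if k \<in> \<sigma> then a k else 0)
      - (if k \<in> Z then t (fst k) else 0)" for k
  have l_out: "\<forall>k. k \<notin> J \<longrightarrow> l k = 0"
  proof (intro allI impI)
    fix k assume kJ: "k \<notin> J"
    have "k \<notin> P" using kJ PJ by auto
    moreover have "k \<notin> \<sigma>" using kJ sJ by auto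
    moreover have "k \<notin> Z" using kJ Z_sub_J by auto
    ultimately show "l k = 0" unfolding l_def
      by (simp only: if_not_P[OF \<open>k \<notin> P\<close>] if_not_P[OF \<open>k \<notin> \<sigma>\<close>] if_not_P[OF \<open>k \<notin> Z\<close>]) simp
  qed
  have pt: "l k *s nuN \<rho> k = (if k \<in> P then \<rho> k else 0) - (if k \<in> \<sigma> then a k *s \<rho> k else 0)"
    if kJ: "k \<in> J" for k
  proof (cases "k \<in> R")
    case True
    then have "k \<notin> Z" using Z_R by auto
    then show ?thesis using True unfolding l_def if_not_P[OF \<open>k \<notin> Z\<close>] by (simp add: nuN_R)
  next
    case False
    then have kZ: "k \<in> Z" using kJ J_eq by auto
    have "k \<notin> P" "k \<notin> \<sigma>" using False PR sR by auto
    then show ?thesis using kZ by (simp add: nuN_Z)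
  qed
  have l_N: "(\<Sum>k\<in>J. l k *s nuN \<rho> k) = 0"
  proof -
    have "(\<Sum>k\<in>J. l k *s nuN \<rho> k) = (\<Sum>k\<in>J. (if k \<in> P then \<rho> k else 0) - (if k \<in> \<sigma> then a k *s \<rho> k else 0))"
      by (rule sum.cong) (simp_all add: pt)
    also have "\<dots> = (\<Sum>k\<in>J. if k \<in> P then \<rho> k else 0) - (\<Sum>k\<in>J. if k \<in> \<sigma> then a k *s \<rho> k else 0)"
      by (rule sum_subtractf)
    also have "(\<Sum>k\<in>J. if k \<in> P then \<rho> k else 0) = (\<Sum>k\<in>J \<inter> P. \<rho> k)"
      by (rule sum.inter_restrict[symmetric]) simp
    also have "J \<inter> P = P" using PJ by auto
    also have "(\<Sum>k\<in>J. if k \<in> \<sigma> then a k *s \<rho> k else 0) = (\<Sum>k\<in>J \<inter> \<sigma>. a k *s \<rho> k)"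
      by (rule sum.inter_restrict[symmetric]) simp
    also have "J \<inter> \<sigma> = \<sigma>" using sJ by auto
    finally show ?thesis using v by simp
  qed
  have l_Z: "\<forall>i\<in>{1..r}. (\<Sum>k\<in>{k\<in>J. fst k = i}. l k) = 0"
  proof
    fix i assume i: "i \<in> {1..r}"
    have e1: "(\<Sum>k\<in>{k\<in>J. fst k = i}. if k \<in> P then 1 else 0) = cP i"
      unfolding cP_def by (rule sum_swap_filter[OF finite_Jset PJ])
    have e2: "(\<Sum>k\<in>{k\<in>J. fst k = i}. if k \<in> \<sigma> then a k else 0) = cS i"
      unfolding cS_def by (rule sum_swap_filter[OF finite_Jset sJ])
    have "(\<Sum>k\<in>{k\<in>J. fst k = i}. if k \<in> Z then t (fst k) else 0)
        = (\<Sum>j\<in>{0..nn i}. if (i, j) \<in> Z then t (fst (i, j)) else 0)"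
      by (rule sum_slice[OF i])
    also have "\<dots> = (\<Sum>j\<in>{0..nn i}. if j = 0 then t i else 0)"
      by (rule sum.cong) (use i in auto)
    also have "\<dots> = t i" by simp
    finally have e3: "(\<Sum>k\<in>{k\<in>J. fst k = i}. if k \<in> Z then t (fst k) else 0) = t i" .
    have "(\<Sum>k\<in>{k\<in>J. fst k = i}. l k) =
        (\<Sum>k\<in>{k\<in>J. fst k = i}. if k \<in> P then 1 else 0)
      - (\<Sum>k\<in>{k\<in>J. fst k = i}. if k \<in> \<sigma> then a k else 0)
      - (\<Sum>k\<in>{k\<in>J. fst k = i}. if k \<in> Z then t (fst k) else 0)"
      unfolding l_def by (simp only: sum_subtractf)
    also have "\<dots> = 0" unfolding e1 e2 e3 by (simp add: t_def)
    finally show "(\<Sum>k\<in>{k\<in>J. fst k = i}. l k) = 0" .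
  qed
  have lL: "l \<in> L_ext \<rho> r nn" unfolding L_ext_def using l_out l_N l_Z by blast
  define lp where "lp = expo J (\<lambda>k. nat (l k))"
  define lm where "lm = expo J (\<lambda>k. nat (- l k))"
  define g where "g = ymono lp - ymono lm"
  have g_in: "g \<in> toric_ideal \<rho> r nn"
    unfolding toric_ideal_def g_def lp_def lm_def using lL by (intro ideal_gen_gen) blast
  have dgeq: "dg \<rho> J lp = dg \<rho> J lm" unfolding lp_def lm_def by (rule gen_dg[OF lL])
  have kp: "Poly_Mapping.keys lp \<subseteq> J" unfolding lp_def by (rule keys_expo[OF finite_Jset])
  have km: "Poly_Mapping.keys lm \<subseteq> Z \<union> \<sigma>"
  proof
    fix k assume k: "k \<in> Poly_Mapping.keys lm"
    then have kJ: "k \<in> J" and lk: "nat (- l k) \<noteq> 0"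
      unfolding lm_def in_keys_iff by (simp_all add: lookup_expo split: if_splits)
    show "k \<in> Z \<union> \<sigma>"
    proof (rule ccontr)
      assume nZ: "k \<notin> Z \<union> \<sigma>"
      have k1: "k \<notin> Z" using nZ by (rule contrapos_nn) (rule UnI1)
      have k2: "k \<notin> \<sigma>" using nZ by (rule contrapos_nn) (rule UnI2)
      have "l k = (if k \<in> P then 1 else 0)" unfolding l_def if_not_P[OF k1] if_not_P[OF k2] by simp
      then show False using lk by simp
    qed
  qed
  have pm: "lp \<noteq> lm"
  proof
    assume eq: "lp = lm"
    have l0: "l k = 0" if "k \<in> J" for k
    proof -
      have "Poly_Mapping.lookup lp k = Poly_Mapping.lookup lm k" using eq by simp
      then have "nat (l k) = nat (- l k)" using that unfolding lp_def lm_def by (simp add: lookup_expo)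
      then show ?thesis by simp
    qed
    have "P \<subseteq> \<sigma>"
    proof
      fix k assume kP: "k \<in> P"
      have "k \<notin> Z" using kP PR Z_R by auto
      moreover have "k \<in> J" using kP PJ by (rule subsetD[rotated])
      then have "l k = 0" by (rule l0)
      ultimately show "k \<in> \<sigma>" using kP unfolding l_def by (auto split: if_splits)
    qed
    then have "P \<in> cones" using sc by (rule cones_down[rotated])
    then show False using Pnc by simp
  qed
  have wlt: "weight \<omega> lm < weight \<omega> lp"
    by (rule strict_weight[OF sig km kp dgeq pm])
  have lookup_g: "Poly_Mapping.lookup g x = (if x = lp then 1 else 0) - (if x = lm then 1 else 0)" for x
    unfolding g_def ymono_def by (simp add: lookup_minus lookup_single when_def)
  have keys_g: "Poly_Mapping.keys g = {lp, lm}"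
    using pm by (auto simp: in_keys_iff lookup_g split: if_splits)
  have maxw: "Max (weight \<omega> ` Poly_Mapping.keys g) = weight \<omega> lp"
    unfolding keys_g using wlt by (intro Max_eqI) auto
  have Sset: "{m \<in> Poly_Mapping.keys g. weight \<omega> m = Max (weight \<omega> ` Poly_Mapping.keys g)} = {lp}"
    unfolding maxw unfolding keys_g using wlt by auto
  have inf: "in_form \<omega> g = ymono lp"
    unfolding in_form_def Sset using pm by (simp add: lookup_g ymono_def)
  have inlead: "ymono lp \<in> lead_ideal J \<omega> (toric_ideal \<rho> r nn)"
    unfolding lead_ideal_def inf[symmetric] using g_in by (intro ideal_gen_gen) blast
  define E where "E = expo P (\<lambda>_. 1)"
  have le: "Poly_Mapping.lookup lp k \<le> Poly_Mapping.lookup E k" for k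
  proof (cases "k \<in> J")
    case False
    then show ?thesis unfolding lp_def by (simp add: lookup_expo)
  next
    case True
    have s1: "0 \<le> (if k \<in> \<sigma> then a k else 0)" using a0 by simp
    have s2: "0 \<le> (if k \<in> Z then t (fst k) else 0)"
    proof (cases "k \<in> Z")
      case True
      then have "fst k \<in> {1..r}" by auto
      then show ?thesis using True cle unfolding t_def by simp
    next
      case False
      then show ?thesis by (simp only: if_not_P[OF False]) simp
    qed
    have "l k \<le> (if k \<in> P then 1 else 0)" unfolding l_def using s1 s2 by linarith
    then have "nat (l k) \<le> (if k \<in> P then 1 else 0)" by (simp split: if_splits)
    then show ?thesis using True fP unfolding lp_def E_def by (simp add: lookup_expo split: if_splits)
  qed
  have mE: "E = (E - lp) + lp"
  proof (rule poly_mapping_eqI)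
    fix k show "Poly_Mapping.lookup E k = Poly_Mapping.lookup (E - lp + lp) k"
      using le[of k] by (simp add: lookup_add lookup_minus)
  qed
  have kE: "Poly_Mapping.keys (E - lp) \<subseteq> J"
  proof
    fix k assume "k \<in> Poly_Mapping.keys (E - lp)"
    then have "Poly_Mapping.lookup E k \<noteq> 0" by (simp add: in_keys_iff lookup_minus)
    then have "k \<in> P" using fP unfolding E_def by (simp add: lookup_expo split: if_splits)
    then show "k \<in> J" using PJ by auto
  qed
  have "ymono E = ymono (E - lp) * ymono lp"
    by (subst mE) (simp add: ymono_def mult_single)
  moreover have "ymono (E - lp) \<in> polyJ J" using kE by (rule ymono_polyJ)
  ultimately show ?thesis unfolding E_def[symmetric] using inlead
    unfolding lead_ideal_def by (simp add: ideal_gen_mult)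
qed

lemma supset_dir: "stanley_reisner r nn cones \<subseteq> lead_ideal J \<omega> (toric_ideal \<rho> r nn)"
proof -
  have H: "{ymono (expo P (\<lambda>_. 1)) | P. primitive_collection R cones P} \<subseteq> ideal_gen J (in_form \<omega> ` toric_ideal \<rho> r nn)"
    using prim_in_lead unfolding lead_ideal_def by blast
  show ?thesis unfolding lead_ideal_def stanley_reisner_def by (rule ideal_gen_subset[OF H])
qed

lemma main: "lead_ideal J \<omega> (toric_ideal \<rho> r nn) = stanley_reisner r nn cones"
  using subset_dir supset_dir by (rule subset_antisym)

end


theorem mainTheorem6:
  fixes \<rho> :: "nat \<times> nat \<Rightarrow> int ^ 'n"
    and r :: nat and nn :: "nat \<Rightarrow> nat"
    and cones :: "(nat \<times> nat) set set"
    and \<omega> :: "nat \<times> nat \<Rightarrow> real"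
  assumes "is_fan \<rho> (Rays r nn) cones"
    and "smooth_fan \<rho> (Rays r nn) cones"
    and "complete_fan \<rho> cones"
    and "projective_fan \<rho> (Rays r nn) cones"
    and "nef_partition \<rho> r nn cones"
    and "reg_subdiv \<rho> r nn \<omega> = T_max r cones"
  shows "lead_ideal (Jset r nn) \<omega> (toric_ideal \<rho> r nn) = stanley_reisner r nn cones"
proof -
  have T: "tsetup \<rho> r nn cones \<omega>"
    unfolding tsetup_def using assms(1) assms(2) assms(3) assms(5) assms(6) by (intro conjI)
  show ?thesis by (rule tsetup.main[OF T])
qed

end
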